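(* Fix integers $n,L\ge1$ and $\delta>0$. Consider the $L$-layer linear Transformer acting on $Z_l\in\mathbb{R}^{3n\times n}$ by $$Z_{l+1}=Z_l+W^V_l Z_l Z_l^\top (W^Q_l)^\top W^K_l Z_l+W^R_l Z_l,$$ with weights $W^V_l,W^Q_l,W^K_l,W^R_l\in\mathbb{R}^{3n\times 3n}$, and for a graph Laplacian $\mathcal{L}\in\mathbb{R}^{n\times n}$ let the input be $Z_0^\top=\begin{bmatrix}(\hat I_{n\times n}-\delta\mathcal{L}), & I_{n\times n}, & \delta I_{n\times n}\end{bmatrix}$. Then there exists a choice of the weights such that for every connected graph on $n$ vertices whose Laplacian has smallest nonzero eigenvalue $\lambda_{\min}$ and largest eigenvalue $\lambda_{\max}\le1/\delta$, $$\left\|[Z_L]_{2n+1\ldots3n}-\mathcal{L}^\dagger\right\|_2\le\frac{1}{\lambda_{\min}}\exp\!\left(-\delta 2^{L}\lambda_{\min}\right).$$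
   Context: A graph has $n$ vertices, $d$ edges and positive edge resistances $r_j$; graphs are connected. With an arbitrary edge orientation, the incidence matrix $B\in\mathbb{R}^{n\times d}$ has $B_{ij}=\mp1/\sqrt{r_j}$ if $e_j$ leaves/enters vertex $i$ and $0$ otherwise, and $\mathcal{L}=BB^\top$. $\mathcal{L}^\dagger$ is the pseudoinverse, $\hat I_{n\times n}=I_{n\times n}-\frac1n\vec1\vec1^\top$, and $[Z]_{a\ldots b}$ denotes the submatrix of rows $a$ through $b$ of $Z$. $\|\cdot\|_2$ is the spectral norm. *)

theory Defs
  imports "Jordan_Normal_Form.Matrix" "Jordan_Normal_Form.Char_Poly"
begin

text \<open>A graph on vertices 0..n-1 with d edges; edge j is oriented from
  vertex etl j to vertex ehd j and has resistance r j.\<close>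

definition valid_graph :: "nat \<Rightarrow> nat \<Rightarrow> (nat \<Rightarrow> nat) \<Rightarrow> (nat \<Rightarrow> nat) \<Rightarrow> (nat \<Rightarrow> real) \<Rightarrow> bool" where
  "valid_graph n d etl ehd r \<longleftrightarrow>
     (\<forall>j<d. etl j < n \<and> ehd j < n \<and> etl j \<noteq> ehd j \<and> r j > 0)"

definition graph_connected :: "nat \<Rightarrow> nat \<Rightarrow> (nat \<Rightarrow> nat) \<Rightarrow> (nat \<Rightarrow> nat) \<Rightarrow> bool" where
  "graph_connected n d etl ehd \<longleftrightarrow>
     (\<forall>i<n. \<forall>k<n. (i, k) \<in> ({(etl j, ehd j) | j. j < d} \<union> {(ehd j, etl j) | j. j < d})\<^sup>*)"

definition incidence_mat :: "nat \<Rightarrow> nat \<Rightarrow> (nat \<Rightarrow> nat) \<Rightarrow> (nat \<Rightarrow> nat) \<Rightarrow> (nat \<Rightarrow> real) \<Rightarrow> real mat" where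
  "incidence_mat n d etl ehd r = mat n d (\<lambda>(i, j).
     if i = etl j then - 1 / sqrt (r j) else if i = ehd j then 1 / sqrt (r j) else 0)"

definition laplacian :: "nat \<Rightarrow> nat \<Rightarrow> (nat \<Rightarrow> nat) \<Rightarrow> (nat \<Rightarrow> nat) \<Rightarrow> (nat \<Rightarrow> real) \<Rightarrow> real mat" where
  "laplacian n d etl ehd r = incidence_mat n d etl ehd r * (incidence_mat n d etl ehd r)\<^sup>T"

definition pinv :: "real mat \<Rightarrow> real mat" where
  "pinv A = (THE X. X \<in> carrier_mat (dim_col A) (dim_row A) \<and>
       A * X * A = A \<and> X * A * X = X \<and> (A * X)\<^sup>T = A * X \<and> (X * A)\<^sup>T = X * A)"

definition spec_norm :: "real mat \<Rightarrow> real" where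
  "spec_norm A = Sup {sqrt ((A *\<^sub>v v) \<bullet> (A *\<^sub>v v)) | v. v \<in> carrier_vec (dim_col A) \<and> v \<bullet> v = 1}"

definition centering_mat :: "nat \<Rightarrow> real mat" where
  "centering_mat n = 1\<^sub>m n - mat n n (\<lambda>_. 1 / real n)"

definition tf_layer :: "real mat \<Rightarrow> real mat \<Rightarrow> real mat \<Rightarrow> real mat \<Rightarrow> real mat \<Rightarrow> real mat" where
  "tf_layer WV WQ WK WR Z = Z + WV * Z * Z\<^sup>T * WQ\<^sup>T * WK * Z + WR * Z"

fun tf_run :: "(nat \<Rightarrow> real mat) \<Rightarrow> (nat \<Rightarrow> real mat) \<Rightarrow> (nat \<Rightarrow> real mat) \<Rightarrow> (nat \<Rightarrow> real mat)
    \<Rightarrow> nat \<Rightarrow> real mat \<Rightarrow> real mat" where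
  "tf_run WV WQ WK WR 0 Z = Z"
| "tf_run WV WQ WK WR (Suc l) Z = tf_layer (WV l) (WQ l) (WK l) (WR l) (tf_run WV WQ WK WR l Z)"

definition tf_input :: "nat \<Rightarrow> real \<Rightarrow> real mat \<Rightarrow> real mat" where
  "tf_input n \<delta> Lap = transpose_mat (mat n (3 * n) (\<lambda>(i, j).
      if j < n then (centering_mat n - \<delta> \<cdot>\<^sub>m Lap) $$ (i, j)
      else if j < 2 * n then (if j - n = i then 1 else 0)
      else (if j - 2 * n = i then \<delta> else 0)))"

text \<open>Rows a..b (1-indexed, inclusive) of Z.\<close>
definition row_block :: "nat \<Rightarrow> nat \<Rightarrow> real mat \<Rightarrow> real mat" where
  "row_block a b Z = mat (b + 1 - a) (dim_col Z) (\<lambda>(i, j). Z $$ (a - 1 + i, j))"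

end

theory Submission
  imports Defs "HOL-Analysis.Function_Topology"
begin


lemma vsq_nonneg: "0 \<le> v \<bullet> (v::real vec)"
  by (simp add: scalar_prod_def sum_nonneg)

lemma vsq_zero: assumes "v \<in> carrier_vec n" "v \<bullet> (v::real vec) = 0" shows "v = 0\<^sub>v n"
proof -
  have "\<forall>i\<in>{0..<n}. v $ i * v $ i = 0"
    using assms by (subst sum_nonneg_eq_0_iff[symmetric]) (auto simp: scalar_prod_def)
  thus ?thesis using assms by (auto simp: Matrix.vec_eq_iff)
qed

definition qf :: "nat \<Rightarrow> real mat \<Rightarrow> (nat \<Rightarrow> real) \<Rightarrow> real" where
  "qf n S f = (\<Sum>i<n. \<Sum>j<n. f i * S $$ (i,j) * f j)"

lemma qf_vec: assumes "S \<in> carrier_mat n n" "v \<in> carrier_vec n"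
  shows "v \<bullet> (S *\<^sub>v v) = qf n S (\<lambda>i. v $ i)"
  using assms unfolding qf_def scalar_prod_def mult_mat_vec_def
  by (auto simp: sum_distrib_left lessThan_atLeast0 intro!: sum.cong simp: ac_simps)

lemma qf_cont: "continuous_on UNIV (qf n S)"
  unfolding qf_def
  by (intro continuous_intros continuous_on_product_then_coordinatewise[OF continuous_on_id])

lemma coord_cont: "continuous_on UNIV (\<lambda>f::nat\<Rightarrow>real. f i)"
  by simp

definition sph :: "nat \<Rightarrow> (nat \<Rightarrow> real) set" where
  "sph n = {f. (\<forall>i. n \<le> i \<longrightarrow> f i = 0) \<and> (\<Sum>i<n. f i * f i) = 1 \<and> (\<Sum>i<n. f i) = 0}"

lemma sph_closed: "closed (sph n)"
proof -
  have c0: "closed {f::nat\<Rightarrow>real. \<forall>i. n \<le> i \<longrightarrow> f i = 0}"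
  proof -
    have "{f::nat\<Rightarrow>real. \<forall>i. n \<le> i \<longrightarrow> f i = 0} = (\<Inter>i\<in>{n..}. {f. f i = 0})" by auto
    thus ?thesis by (auto intro!: closed_INT closed_Collect_eq continuous_on_product_then_coordinatewise[OF continuous_on_id])
  qed
  have "sph n = {f. \<forall>i. n \<le> i \<longrightarrow> f i = 0} \<inter> {f. (\<Sum>i<n. f i * f i) = 1} \<inter> {f. (\<Sum>i<n. f i) = 0}"
    unfolding sph_def by auto
  also have "closed \<dots>"
    by (intro closed_Int c0 closed_Collect_eq continuous_intros
       continuous_on_product_then_coordinatewise[OF continuous_on_id])
  finally show ?thesis .
qed

lemma sph_bound: assumes "f \<in> sph n" "i < n" shows "\<bar>f i\<bar> \<le> 1"
proof -
  have "f i * f i \<le> (\<Sum>j<n. f j * f j)"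
    using assms(2) by (intro member_le_sum) auto
  hence "f i * f i \<le> 1" using assms(1) unfolding sph_def by auto
  thus ?thesis by (smt (verit) less_1_mult mult.commute mult_minus_right)
qed

lemma sph_compact: "compact (sph n)"
proof -
  define K where "K = PiE UNIV (\<lambda>i::nat. if i < n then {-1..1::real} else {0})"
  have "compactin (product_topology (\<lambda>i. euclidean) UNIV) K"
    unfolding K_def compactin_PiE by auto
  hence cK: "compact K" by (simp add: euclidean_product_topology)
  have "sph n \<subseteq> K"
    unfolding K_def using sph_bound by (fastforce simp: sph_def abs_le_iff)
  hence "sph n = K \<inter> sph n" by auto
  thus ?thesis using compact_Int_closed[OF cK sph_closed] by metis
qed

lemma quad_zero: fixes a b :: real assumes "\<And>t. 0 \<le> 2*t*b + t*t*a" shows "b = 0"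
proof (rule ccontr)
  assume b: "b \<noteq> 0"
  define s where "s = \<bar>a\<bar> + 1"
  have s: "s > 0" "\<bar>a\<bar> \<le> s" unfolding s_def by auto
  have "0 \<le> 2*(-b/s)*b + (-b/s)*(-b/s)*a" by (rule assms)
  hence "0 \<le> s*s*(2*(-b/s)*b + (-b/s)*(-b/s)*a)" using s by simp
  also have "s*s*(2*(-b/s)*b + (-b/s)*(-b/s)*a) = -2*s*b*b + b*b*a" using s by (simp add: field_simps)
  finally have "2*s*(b*b) \<le> (b*b)*a" by simp
  moreover have "(b*b)*a \<le> (b*b)*s" using s by (intro mult_left_mono) auto
  moreover have "b*b > 0" using b by (simp add: zero_less_mult_iff linorder_neq_iff) blast
  ultimately show False using s by (smt (verit) mult_le_cancel_left mult.commute)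
qed

definition onev :: "nat \<Rightarrow> real vec" where "onev n = vec n (\<lambda>_. 1)"

lemma onev_carrier[simp]: "onev n \<in> carrier_vec n" by (simp add: onev_def)

lemma onev_sprod: "v \<in> carrier_vec n \<Longrightarrow> onev n \<bullet> v = (\<Sum>i<n. v $ i)"
  by (simp add: onev_def scalar_prod_def lessThan_atLeast0)

lemma qf_cong: "(\<And>i. i < n \<Longrightarrow> f i = g i) \<Longrightarrow> qf n S f = qf n S g"
  unfolding qf_def by (intro sum.cong refl) auto

lemma unit_in_sph: assumes "u \<in> carrier_vec n" "u \<bullet> u = 1" "onev n \<bullet> u = 0"
  shows "(\<lambda>i. if i < n then u $ i else 0) \<in> sph n"
  using assms unfolding sph_def by (auto simp: onev_def scalar_prod_def lessThan_atLeast0)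

lemma sym_sprod: fixes S :: "real mat" assumes "S \<in> carrier_mat n n" "S\<^sup>T = S" "v \<in> carrier_vec n" "w \<in> carrier_vec n"
  shows "v \<bullet> (S *\<^sub>v w) = (S *\<^sub>v v) \<bullet> w"
  using transpose_vec_mult_scalar[of S n n w v] assms by simp

lemma rayleigh:
  assumes S: "S \<in> carrier_mat n n" and sym: "S\<^sup>T = S" and S1: "S *\<^sub>v onev n = 0\<^sub>v n"
  and x: "x \<in> carrier_vec n" "x \<noteq> 0\<^sub>v n" "onev n \<bullet> x = 0"
  shows "\<exists>w m. w \<in> carrier_vec n \<and> w \<noteq> 0\<^sub>v n \<and> onev n \<bullet> w = 0 \<and> S *\<^sub>v w = m \<cdot>\<^sub>v w \<and>
     (\<forall>y\<in>carrier_vec n. onev n \<bullet> y = 0 \<longrightarrow> m * (y \<bullet> y) \<le> y \<bullet> (S *\<^sub>v y))"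
proof -
  have V: "onev n \<bullet> (S *\<^sub>v v) = 0" if "v \<in> carrier_vec n" for v
    using sym_sprod[OF S sym onev_carrier that] S1 that by simp
  have norm: "\<exists>u. u \<in> carrier_vec n \<and> u \<bullet> u = 1 \<and> onev n \<bullet> u = 0 \<and> y = sqrt (y \<bullet> y) \<cdot>\<^sub>v u"
    if y: "y \<in> carrier_vec n" "y \<noteq> 0\<^sub>v n" "onev n \<bullet> y = 0" for y
  proof -
    have pos: "y \<bullet> y > 0" using vsq_nonneg[of y] vsq_zero[OF y(1)] y(2) by force
    define c where "c = sqrt (y \<bullet> y)"
    have c: "c > 0" "c * c = y \<bullet> y" using pos unfolding c_def by auto
    define u where "u = (1/c) \<cdot>\<^sub>v y"
    have u: "u \<in> carrier_vec n" unfolding u_def using y by simp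
    have "u \<bullet> u = (1/c) * (1/c) * (y \<bullet> y)" unfolding u_def using y(1)
      by (simp add: smult_scalar_prod_distrib scalar_prod_smult_distrib)
    also have "\<dots> = 1" using c pos by (simp add: field_simps)
    finally have uu: "u \<bullet> u = 1" .
    have "onev n \<bullet> u = 0" unfolding u_def using y by (simp add: scalar_prod_smult_distrib)
    moreover have "y = c \<cdot>\<^sub>v u" unfolding u_def using c y(1) by (auto simp: Matrix.vec_eq_iff)
    ultimately show ?thesis using u uu unfolding c_def by blast
  qed
  obtain u0 where u0: "u0 \<in> carrier_vec n" "u0 \<bullet> u0 = 1" "onev n \<bullet> u0 = 0"
    using norm[OF x] by blast
  have ne: "sph n \<noteq> {}" using unit_in_sph[OF u0] by blast
  obtain f0 where f0: "f0 \<in> sph n" and fmin: "\<And>g. g \<in> sph n \<Longrightarrow> qf n S f0 \<le> qf n S g"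
    using continuous_attains_inf[OF sph_compact ne continuous_on_subset[OF qf_cont subset_UNIV]] by blast
  define w where "w = vec n f0"
  define m where "m = qf n S f0"
  have w: "w \<in> carrier_vec n" unfolding w_def by simp
  have ww: "w \<bullet> w = 1" using f0 unfolding w_def sph_def by (simp add: scalar_prod_def lessThan_atLeast0)
  have w1: "onev n \<bullet> w = 0" using f0 unfolding w_def sph_def by (simp add: onev_sprod)
  have wm: "w \<bullet> (S *\<^sub>v w) = m"
  proof -
    have "w \<bullet> (S *\<^sub>v w) = qf n S (\<lambda>i. w $ i)" by (rule qf_vec[OF S w])
    also have "\<dots> = qf n S f0" by (rule qf_cong) (simp add: w_def)
    finally show ?thesis unfolding m_def .
  qed
  have unitmin: "m \<le> u \<bullet> (S *\<^sub>v u)" if "u \<in> carrier_vec n" "u \<bullet> u = 1" "onev n \<bullet> u = 0" for u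
  proof -
    have "m \<le> qf n S (\<lambda>i. if i < n then u $ i else 0)" unfolding m_def by (rule fmin[OF unit_in_sph[OF that]])
    also have "\<dots> = u \<bullet> (S *\<^sub>v u)" unfolding qf_vec[OF S that(1)] by (rule qf_cong) simp
    finally show ?thesis .
  qed
  have allmin: "m * (y \<bullet> y) \<le> y \<bullet> (S *\<^sub>v y)" if y: "y \<in> carrier_vec n" "onev n \<bullet> y = 0" for y
  proof (cases "y = 0\<^sub>v n")
    case True thus ?thesis using S by simp
  next
    case False
    then obtain u where u: "u \<in> carrier_vec n" "u \<bullet> u = 1" "onev n \<bullet> u = 0" and yu: "y = sqrt (y \<bullet> y) \<cdot>\<^sub>v u"
      using norm[OF y(1) False y(2)] by blast
    define c where "c = sqrt (y \<bullet> y)"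
    have yu': "y = c \<cdot>\<^sub>v u" using yu unfolding c_def .
    have "y \<bullet> y = c * c" using yu' u by (simp add: smult_scalar_prod_distrib scalar_prod_smult_distrib mult_mat_vec[OF S])
    moreover have "y \<bullet> (S *\<^sub>v y) = c * c * (u \<bullet> (S *\<^sub>v u))" using u S unfolding yu'
      by (simp add: smult_scalar_prod_distrib scalar_prod_smult_distrib mult_mat_vec[OF S])
    ultimately show ?thesis using unitmin[OF u] mult_left_mono[of m "u \<bullet> (S *\<^sub>v u)" "c*c"]
      by (simp add: mult.commute)
  qed
  define r where "r = S *\<^sub>v w - m \<cdot>\<^sub>v w"
  have r: "r \<in> carrier_vec n" unfolding r_def using S w by simp
  have r1: "onev n \<bullet> r = 0"
  proof -
    have "onev n \<bullet> r = onev n \<bullet> (S *\<^sub>v w) - onev n \<bullet> (m \<cdot>\<^sub>v w)" unfolding r_def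
      by (rule scalar_prod_minus_distrib) (use S w in auto)
    also have "\<dots> = 0" using V[OF w] w1 w by (simp add: scalar_prod_smult_distrib[of _ n])
    finally show ?thesis .
  qed
  have Swr: "S *\<^sub>v w = r + m \<cdot>\<^sub>v w" unfolding r_def using S w by auto
  have rw: "r \<bullet> (S *\<^sub>v w) = r \<bullet> r + m * (r \<bullet> w)"
  proof -
    from Swr show ?thesis using r w by (simp add: scalar_prod_add_distrib scalar_prod_smult_distrib)
  qed
  note vs = scalar_prod_add_distrib[where n=n] add_scalar_prod_distrib[where n=n]
    scalar_prod_smult_distrib[where n=n] smult_scalar_prod_distrib[where n=n]
    mult_add_distrib_mat_vec[OF S] mult_mat_vec[OF S]
  have key: "0 \<le> 2*t*(r \<bullet> r) + t*t*(r \<bullet> (S *\<^sub>v r) - m * (r \<bullet> r))" for t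
  proof -
    define y where "y = w + t \<cdot>\<^sub>v r"
    have y: "y \<in> carrier_vec n" unfolding y_def using w r by simp
    have y1: "onev n \<bullet> y = 0" unfolding y_def using w r w1 r1
      by (simp add: vs)
    have yy: "y \<bullet> y = 1 + 2*t*(r \<bullet> w) + t*t*(r \<bullet> r)"
      unfolding y_def using w r ww comm_scalar_prod[OF w r]
      by (simp add: vs algebra_simps)
    have ws: "w \<bullet> (S *\<^sub>v r) = r \<bullet> (S *\<^sub>v w)"
      using sym_sprod[OF S sym w r] comm_scalar_prod[of "S *\<^sub>v w" n r] S w r by simp
    have ySy: "y \<bullet> (S *\<^sub>v y) = m + 2*t*(r \<bullet> r + m * (r \<bullet> w)) + t*t*(r \<bullet> (S *\<^sub>v r))"
      unfolding y_def using w r S wm ws rw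
      by (simp add: vs algebra_simps)
    from allmin[OF y y1] show ?thesis unfolding yy ySy by (simp add: algebra_simps)
  qed
  have "r \<bullet> r = 0" using quad_zero[OF key] .
  hence "r = 0\<^sub>v n" using vsq_zero[OF r] by simp
  hence "S *\<^sub>v w = m \<cdot>\<^sub>v w" unfolding Swr using w by simp
  moreover have "w \<noteq> 0\<^sub>v n" using ww by auto
  ultimately show ?thesis using w w1 allmin by blast
qed


lemma inc_dims[simp]: "dim_row (incidence_mat n d etl ehd r) = n" "dim_col (incidence_mat n d etl ehd r) = d"
  unfolding incidence_mat_def by (simp_all only: dim_row_mat dim_col_mat)

lemma inc_carrier[simp]: "incidence_mat n d etl ehd r \<in> carrier_mat n d"
  by (rule carrier_matI) simp_all

lemma lap_dims[simp]: "dim_row (laplacian n d etl ehd r) = n" "dim_col (laplacian n d etl ehd r) = n"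
  by (simp_all add: laplacian_def)

lemma lap_carrier[simp]: "laplacian n d etl ehd r \<in> carrier_mat n n"
  by (rule carrier_matI) simp_all

lemma incT_vec_carrier[simp]: "(incidence_mat n d etl ehd r)\<^sup>T *\<^sub>v v \<in> carrier_vec d"
  by (rule carrier_vecI) simp

lemma mat_vec_zero: "A \<in> carrier_mat n d \<Longrightarrow> A *\<^sub>v 0\<^sub>v d = (0\<^sub>v n :: 'a::semiring_0 vec)"
  by (rule eq_vecI) (auto simp: mult_mat_vec_def scalar_prod_def)

lemma lap_sym: "(laplacian n d etl ehd r)\<^sup>T = laplacian n d etl ehd r"
  unfolding laplacian_def
  by (subst transpose_mult[of _ n d _ n]) auto

lemma inc_col: assumes vg: "valid_graph n d etl ehd r" and j: "j < d" and v: "v \<in> carrier_vec n"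
  shows "((incidence_mat n d etl ehd r)\<^sup>T *\<^sub>v v) $ j = (v $ ehd j - v $ etl j) / sqrt (r j)"
proof -
  from vg j have e: "etl j < n" "ehd j < n" "etl j \<noteq> ehd j" unfolding valid_graph_def by auto
  let ?c = "1 / sqrt (r j)"
  have "((incidence_mat n d etl ehd r)\<^sup>T *\<^sub>v v) $ j =
     (\<Sum>i\<in>{0..<n}. (if i = etl j then - 1 / sqrt (r j) else if i = ehd j then ?c else 0) * v $ i)"
    using j v by (simp add: incidence_mat_def mult_mat_vec_def scalar_prod_def row_def)
  also have "\<dots> = (\<Sum>i\<in>{0..<n}. (if i = etl j then - (v $ i / sqrt (r j)) else 0) + (if i = ehd j then v $ i / sqrt (r j) else 0))"
    using e by (intro sum.cong) auto
  also have "\<dots> = - (v $ etl j / sqrt (r j)) + v $ ehd j / sqrt (r j)"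
    using e by (simp add: sum.distrib)
  also have "\<dots> = (v $ ehd j - v $ etl j) / sqrt (r j)" by (simp add: diff_divide_distrib)
  finally show ?thesis .
qed

lemma inc_onev: assumes vg: "valid_graph n d etl ehd r"
  shows "(incidence_mat n d etl ehd r)\<^sup>T *\<^sub>v onev n = 0\<^sub>v d"
proof (rule eq_vecI)
  fix j assume "j < dim_vec (0\<^sub>v d :: real vec)"
  hence j: "j < d" by simp
  show "((incidence_mat n d etl ehd r)\<^sup>T *\<^sub>v onev n) $ j = 0\<^sub>v d $ j"
    by (subst inc_col[OF vg j onev_carrier]) (use vg j in \<open>auto simp: onev_def valid_graph_def\<close>)
qed simp

lemma lap_onev: assumes vg: "valid_graph n d etl ehd r"
  shows "laplacian n d etl ehd r *\<^sub>v onev n = 0\<^sub>v n"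
  unfolding laplacian_def
  by (subst assoc_mult_mat_vec[of _ n d _ n]) (auto simp: inc_onev[OF vg] mat_vec_zero)

lemma lap_quad: assumes v: "v \<in> carrier_vec n"
  shows "v \<bullet> (laplacian n d etl ehd r *\<^sub>v v) =
    ((incidence_mat n d etl ehd r)\<^sup>T *\<^sub>v v) \<bullet> ((incidence_mat n d etl ehd r)\<^sup>T *\<^sub>v v)"
proof -
  let ?B = "incidence_mat n d etl ehd r"
  have "laplacian n d etl ehd r *\<^sub>v v = ?B *\<^sub>v (?B\<^sup>T *\<^sub>v v)"
    unfolding laplacian_def by (subst assoc_mult_mat_vec[of _ n d _ n]) (use v in auto)
  thus ?thesis using transpose_vec_mult_scalar[of ?B n d "?B\<^sup>T *\<^sub>v v" v] v by simp
qed

lemma lap_psd: "v \<in> carrier_vec n \<Longrightarrow> 0 \<le> v \<bullet> (laplacian n d etl ehd r *\<^sub>v v)"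
  by (simp add: lap_quad vsq_nonneg)

lemma lap_kernel: assumes vg: "valid_graph n d etl ehd r" and con: "graph_connected n d etl ehd"
  and v: "v \<in> carrier_vec n" and q: "v \<bullet> (laplacian n d etl ehd r *\<^sub>v v) = 0"
  and i: "i < n" and k: "k < n"
  shows "v $ i = v $ k"
proof -
  let ?B = "incidence_mat n d etl ehd r"
  have "?B\<^sup>T *\<^sub>v v = 0\<^sub>v d" using vsq_zero[of "?B\<^sup>T *\<^sub>v v" d] q v by (simp add: lap_quad)
  hence e: "v $ etl j = v $ ehd j" if "j < d" for j
  proof -
    have "(v $ ehd j - v $ etl j) / sqrt (r j) = 0"
      using inc_col[OF vg that v] \<open>?B\<^sup>T *\<^sub>v v = 0\<^sub>v d\<close> that by simp
    moreover have "r j > 0" using vg that unfolding valid_graph_def by auto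
    ultimately show ?thesis by simp
  qed
  let ?R = "{(etl j, ehd j) | j. j < d} \<union> {(ehd j, etl j) | j. j < d}"
  have "(i, k) \<in> ?R\<^sup>*" using con i k unfolding graph_connected_def by blast
  thus ?thesis
  proof (induction rule: rtrancl_induct)
    case base thus ?case by simp
  next
    case (step y z)
    from step.hyps(2) obtain j where j: "j < d" "(y = etl j \<and> z = ehd j) \<or> (y = ehd j \<and> z = etl j)"
      by blast
    have "v $ y = v $ z" using e[OF j(1)] j(2) by auto
    thus ?case using step.IH by simp
  qed
qed


locale lapc =
  fixes n :: nat and L :: "real mat" and \<delta> :: real
  assumes n1: "n \<ge> 1" and Lc[simp]: "L \<in> carrier_mat n n" and Ls: "L\<^sup>T = L"
  and L1: "L *\<^sub>v onev n = 0\<^sub>v n"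
  and Lpsd: "\<And>v. v \<in> carrier_vec n \<Longrightarrow> 0 \<le> v \<bullet> (L *\<^sub>v v)"
  and Lker: "\<And>v i k. v \<in> carrier_vec n \<Longrightarrow> v \<bullet> (L *\<^sub>v v) = 0 \<Longrightarrow> i < n \<Longrightarrow> k < n \<Longrightarrow> v $ i = v $ k"
begin

lemma Ldims[simp]: "dim_row L = n" "dim_col L = n" using carrier_matD[OF Lc] by auto

definition Q :: "real mat" where "Q = mat n n (\<lambda>_. 1 / real n)"
definition P :: "real mat" where "P = 1\<^sub>m n - Q"
definition K :: "real mat" where "K = L + Q"

lemma Qc[simp]: "Q \<in> carrier_mat n n" unfolding Q_def by simp
lemma Pc[simp]: "P \<in> carrier_mat n n" unfolding P_def by (simp add: minus_carrier_mat)
lemma Kc[simp]: "K \<in> carrier_mat n n" unfolding K_def by simp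
lemma Qdims[simp]: "dim_row Q = n" "dim_col Q = n" using carrier_matD[OF Qc] by auto
lemma Pdims[simp]: "dim_row P = n" "dim_col P = n" using carrier_matD[OF Pc] by auto
lemma Kdims[simp]: "dim_row K = n" "dim_col K = n" using carrier_matD[OF Kc] by auto

lemma Q_vec: "v \<in> carrier_vec n \<Longrightarrow> Q *\<^sub>v v = ((onev n \<bullet> v) / real n) \<cdot>\<^sub>v onev n"
  by (rule eq_vecI) (auto simp: Q_def onev_def mult_mat_vec_def scalar_prod_def sum_divide_distrib)

lemma QQ: "Q * Q = Q"
proof (rule eq_matI)
  fix i j assume "i < dim_row Q" "j < dim_col Q"
  hence ij: "i < n" "j < n" by (auto simp: Q_def)
  have "(Q * Q) $$ (i, j) = (\<Sum>k<n. 1 / real n * (1 / real n))"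
    using ij by (simp add: Q_def scalar_prod_def lessThan_atLeast0)
  also have "\<dots> = 1 / real n" using n1 by simp
  finally show "(Q * Q) $$ (i, j) = Q $$ (i, j)" using ij by (simp add: Q_def)
qed (auto simp: Q_def)

lemma QT: "Q\<^sup>T = Q" by (rule eq_matI) (auto simp: Q_def)

lemma L_rowsum: "i < n \<Longrightarrow> (\<Sum>k<n. L $$ (i, k)) = 0"
proof -
  assume i: "i < n"
  have "(L *\<^sub>v onev n) $ i = (\<Sum>k<n. L $$ (i, k))"
    using i by (simp add: mult_mat_vec_def scalar_prod_def onev_def lessThan_atLeast0)
  thus ?thesis using L1 i by simp
qed

lemma LQ: "L * Q = 0\<^sub>m n n"
proof (rule eq_matI)
  fix i j assume "i < dim_row (0\<^sub>m n n :: real mat)" "j < dim_col (0\<^sub>m n n :: real mat)"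
  hence ij: "i < n" "j < n" by auto
  have "(L * Q) $$ (i, j) = (\<Sum>k<n. L $$ (i, k)) / real n"
    using ij by (simp add: Q_def scalar_prod_def lessThan_atLeast0 sum_divide_distrib)
  thus "(L * Q) $$ (i, j) = 0\<^sub>m n n $$ (i, j)" using L_rowsum ij by simp
qed auto

lemma QL: "Q * L = 0\<^sub>m n n"
proof -
  have "Q * L = Q\<^sup>T * L\<^sup>T" using QT Ls by simp
  also have "\<dots> = (L * Q)\<^sup>T" by (rule transpose_mult[OF Lc Qc, symmetric])
  also have "\<dots> = 0\<^sub>m n n" using LQ by simp
  finally show ?thesis .
qed

lemma Q_quad: "v \<in> carrier_vec n \<Longrightarrow> v \<bullet> (Q *\<^sub>v v) = (onev n \<bullet> v)^2 / real n"
  by (simp add: Q_vec scalar_prod_smult_distrib[where n=n] comm_scalar_prod[of v n "onev n"] power2_eq_square)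

lemma K_inj: assumes v: "v \<in> carrier_vec n" and Kv: "K *\<^sub>v v = 0\<^sub>v n" shows "v = 0\<^sub>v n"
proof -
  have "v \<bullet> (K *\<^sub>v v) = v \<bullet> (L *\<^sub>v v) + v \<bullet> (Q *\<^sub>v v)"
    unfolding K_def using v by (simp add: add_mult_distrib_mat_vec[of _ n n]
      scalar_prod_add_distrib[OF v mult_mat_vec_carrier[OF Lc v] mult_mat_vec_carrier[OF Qc v]])
  hence s: "v \<bullet> (L *\<^sub>v v) + (onev n \<bullet> v)^2 / real n = 0" using Kv v by (simp add: Q_quad)
  have a: "0 \<le> v \<bullet> (L *\<^sub>v v)" using Lpsd[OF v] .
  have b: "0 \<le> (onev n \<bullet> v)^2 / real n" by simp
  from s a b have q0: "v \<bullet> (L *\<^sub>v v) = 0" and "(onev n \<bullet> v)^2 / real n = 0" by linarith+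
  hence s0: "onev n \<bullet> v = 0" using n1 by simp
  have const: "v $ i = v $ 0" if "i < n" for i using Lker[OF v q0 that] n1 by simp
  have "onev n \<bullet> v = (\<Sum>i<n. v $ i)" by (rule onev_sprod[OF v])
  also have "\<dots> = (\<Sum>i<n. v $ 0)" by (rule sum.cong) (auto intro: const)
  also have "\<dots> = real n * v $ 0" by simp
  finally have "v $ 0 = 0" using s0 n1 by simp
  show ?thesis
  proof (rule eq_vecI)
    fix i assume "i < dim_vec (0\<^sub>v n :: real vec)"
    hence "i < n" by simp
    thus "v $ i = 0\<^sub>v n $ i" using const[of i] \<open>v $ 0 = 0\<close> by simp
  qed (use v in simp)
qed

lemma K_inv: "\<exists>H. H \<in> carrier_mat n n \<and> H * K = 1\<^sub>m n \<and> K * H = 1\<^sub>m n"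
proof -
  have "Determinant.det K \<noteq> 0"
    using det_0_iff_vec_prod_zero_field[OF Kc] K_inj by blast
  from det_non_zero_imp_unit[OF Kc this, of "()"]
  show ?thesis unfolding Units_def by (auto simp: ring_mat_def)
qed

definition H :: "real mat" where "H = (SOME H. H \<in> carrier_mat n n \<and> H * K = 1\<^sub>m n \<and> K * H = 1\<^sub>m n)"

lemma H: "H \<in> carrier_mat n n" "H * K = 1\<^sub>m n" "K * H = 1\<^sub>m n"
  using someI_ex[OF K_inv] unfolding H_def by blast+

end


context lapc begin

lemmas cm = mult_carrier_mat[where nr=n and n=n and nc=n] minus_carrier_mat[where nr=n and nc=n]
lemmas am = assoc_mult_mat[where n\<^sub>1=n and n\<^sub>2=n and n\<^sub>3=n and n\<^sub>4=n]
lemmas dm = add_mult_distrib_mat[where nr=n and n=n and nc=n] mult_add_distrib_mat[where nr=n and n=n and nc=n]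
  minus_mult_distrib_mat[where nr=n and n=n and nc=n] mult_minus_distrib_mat[where nr=n and n=n and nc=n]
  mult_smult_distrib[where nr=n and n=n and nc=n] mult_smult_assoc_mat[where nr=n and n=n and nc=n]

declare cm[simp]

lemma mat_minus_zero[simp]: "A \<in> carrier_mat n n \<Longrightarrow> A - 0\<^sub>m n n = (A :: real mat)"
  by (rule eq_matI) auto
lemma mat_minus_minus[simp]: "A \<in> carrier_mat n n \<Longrightarrow> B \<in> carrier_mat n n \<Longrightarrow> A - (A - B) = (B :: real mat)"
  by (rule eq_matI) auto
lemma mat_minus_self[simp]: "A \<in> carrier_mat n n \<Longrightarrow> A - A = (0\<^sub>m n n :: real mat)"
  by (rule eq_matI) auto

lemma Hc[simp]: "H \<in> carrier_mat n n" using H by blast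
lemma Hdims[simp]: "dim_row H = n" "dim_col H = n" using carrier_matD[OF Hc] by auto

lemma KQ: "K * Q = Q" unfolding K_def by (simp add: dm LQ QQ)
lemma QK: "Q * K = Q" unfolding K_def by (simp add: dm QL QQ)

lemma HQ: "H * Q = Q"
proof -
  have "H * Q = H * (K * Q)" by (simp add: KQ)
  also have "\<dots> = (H * K) * Q" by (simp add: am)
  also have "\<dots> = Q" using H by simp
  finally show ?thesis .
qed

lemma QH: "Q * H = Q"
proof -
  have "Q * H = (Q * K) * H" by (simp add: QK)
  also have "\<dots> = Q * (K * H)" by (simp add: am)
  also have "\<dots> = Q" using H by simp
  finally show ?thesis .
qed

definition G :: "real mat" where "G = H - Q"
definition M :: "real mat" where "M = 1\<^sub>m n - \<delta> \<cdot>\<^sub>m L"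

lemma Gc[simp]: "G \<in> carrier_mat n n" unfolding G_def by (simp add: minus_carrier_mat)
lemma Mc[simp]: "M \<in> carrier_mat n n" unfolding M_def by (simp add: minus_carrier_mat)
lemma Gdims[simp]: "dim_row G = n" "dim_col G = n" using carrier_matD[OF Gc] by auto
lemma Mdims[simp]: "dim_row M = n" "dim_col M = n" using carrier_matD[OF Mc] by auto

lemma L_KQ: "L = K - Q" unfolding K_def by (rule eq_matI) auto

lemma GQ: "G * Q = 0\<^sub>m n n" unfolding G_def by (simp add: dm HQ QQ)
lemma QG: "Q * G = 0\<^sub>m n n" unfolding G_def by (simp add: dm QH QQ)
lemma LH: "L * H = P" unfolding P_def by (subst L_KQ) (simp add: dm H QH)
lemma HL: "H * L = P" unfolding P_def by (subst L_KQ) (simp add: dm H HQ)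
lemma LG: "L * G = P" unfolding G_def by (simp add: dm LH LQ)
lemma GL: "G * L = P" unfolding G_def by (simp add: dm HL QL)
lemma PG: "P * G = G" unfolding P_def by (simp add: dm QG)
lemma GP: "G * P = G" unfolding P_def by (simp add: dm GQ)
lemma PL: "P * L = L" unfolding P_def by (simp add: dm QL)
lemma LP: "L * P = L" unfolding P_def by (simp add: dm LQ)
lemma PP: "P * P = P" unfolding P_def by (simp add: dm QQ)
lemma PT: "P\<^sup>T = P" unfolding P_def by (simp add: transpose_minus[of _ n n] QT)

lemma MP: "M * P = P * M" unfolding M_def by (simp add: dm PL LP)
lemma G_GM: "G - G * M = \<delta> \<cdot>\<^sub>m P" unfolding M_def by (simp add: dm GL)

end


lemma penrose_unique:
  fixes A X Y :: "real mat"
  assumes cA: "A \<in> carrier_mat n n" and cX: "X \<in> carrier_mat n n" and cY: "Y \<in> carrier_mat n n"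
  and x1: "A * X * A = A" and x2: "X * A * X = X" and x3: "(A * X)\<^sup>T = A * X" and x4: "(X * A)\<^sup>T = X * A"
  and y1: "A * Y * A = A" and y2: "Y * A * Y = Y" and y3: "(A * Y)\<^sup>T = A * Y" and y4: "(Y * A)\<^sup>T = Y * A"
  shows "X = Y"
proof -
  note am = assoc_mult_mat[where n\<^sub>1=n and n\<^sub>2=n and n\<^sub>3=n and n\<^sub>4=n]
  have AT: "A\<^sup>T \<in> carrier_mat n n" "X\<^sup>T \<in> carrier_mat n n" "Y\<^sup>T \<in> carrier_mat n n" using cA cX cY by auto
  have tAX: "(A * X)\<^sup>T = X\<^sup>T * A\<^sup>T" by (rule transpose_mult[OF cA cX])
  have tAY: "(A * Y)\<^sup>T = Y\<^sup>T * A\<^sup>T" by (rule transpose_mult[OF cA cY])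
  have tXA: "(X * A)\<^sup>T = A\<^sup>T * X\<^sup>T" by (rule transpose_mult[OF cX cA])
  have tYA: "(Y * A)\<^sup>T = A\<^sup>T * Y\<^sup>T" by (rule transpose_mult[OF cY cA])
  have e2: "A\<^sup>T = A\<^sup>T * (A * Y)"
  proof -
    have "A\<^sup>T = ((A * Y) * A)\<^sup>T" using y1 by simp
    also have "\<dots> = A\<^sup>T * (A * Y)\<^sup>T" by (rule transpose_mult[of _ n n]) (use cA cY in auto)
    finally show ?thesis using y3 by simp
  qed
  have e2': "A\<^sup>T = (X * A) * A\<^sup>T"
  proof -
    have "A\<^sup>T = (A * (X * A))\<^sup>T" using x1 cA cX by (simp add: am)
    also have "\<dots> = (X * A)\<^sup>T * A\<^sup>T" by (rule transpose_mult[of _ n n]) (use cA cX in auto)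
    finally show ?thesis using x4 by simp
  qed
  have "X = X * (A * X)" using x2 cA cX by (simp add: am)
  also have "\<dots> = X * (X\<^sup>T * A\<^sup>T)" using x3 tAX by simp
  also have "\<dots> = X * (X\<^sup>T * (A\<^sup>T * (A * Y)))" using e2 by simp
  also have "\<dots> = X * ((A * X)\<^sup>T * (A * Y))" using tAX cA cX cY AT by (simp add: am)
  also have "\<dots> = (X * A * X) * (A * Y)" using x3 cA cX cY by (simp add: am)
  also have "\<dots> = X * A * Y" using x2 cA cX cY by (simp add: am)
  finally have X: "X = X * A * Y" .
  have "Y = (Y * A) * Y" using y2 by simp
  also have "\<dots> = (A\<^sup>T * Y\<^sup>T) * Y" using y4 tYA by simp
  also have "\<dots> = (((X * A) * A\<^sup>T) * Y\<^sup>T) * Y" using e2' by simp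
  also have "\<dots> = (X * A) * ((Y * A)\<^sup>T * Y)" using tYA cA cX cY AT by (simp add: am)
  also have "\<dots> = X * A * (Y * A * Y)" using y4 cA cX cY by (simp add: am)
  also have "\<dots> = X * A * Y" using y2 by simp
  finally show ?thesis using X by simp
qed

context lapc begin

lemma pinv_L: "pinv L = G"
  unfolding pinv_def
proof (rule the_equality)
  show "G \<in> carrier_mat (dim_col L) (dim_row L) \<and> L * G * L = L \<and> G * L * G = G \<and>
    (L * G)\<^sup>T = L * G \<and> (G * L)\<^sup>T = G * L"
    by (simp add: LG GL PL PG PT)
next
  fix X assume X: "X \<in> carrier_mat (dim_col L) (dim_row L) \<and> L * X * L = L \<and> X * L * X = X \<and>
    (L * X)\<^sup>T = L * X \<and> (X * L)\<^sup>T = X * L"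
  show "X = G"
    by (rule penrose_unique[of L n X G]) (use X in \<open>simp_all add: LG GL PL PG PT\<close>)
qed

end


definition stack3 :: "nat \<Rightarrow> real mat \<Rightarrow> real mat \<Rightarrow> real mat \<Rightarrow> real mat" where
  "stack3 n X U Y = mat (3*n) n (\<lambda>(i,j). if i < n then X $$ (i,j) else if i < 2*n then U $$ (i-n, j) else Y $$ (i - 2*n, j))"

definition bd3 :: "nat \<Rightarrow> real mat \<Rightarrow> real mat \<Rightarrow> real mat \<Rightarrow> real mat" where
  "bd3 n a b c = mat (3*n) (3*n) (\<lambda>(i,k).
     if i < n then (if k < n then a $$ (i,k) else 0)
     else if i < 2*n then (if n \<le> k \<and> k < 2*n then b $$ (i-n,k-n) else 0)
     else (if 2*n \<le> k then c $$ (i-2*n,k-2*n) else 0))"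

definition shK :: "nat \<Rightarrow> real mat" where
  "shK n = mat (3*n) (3*n) (\<lambda>(i,k). if n \<le> i \<and> i < 2*n \<and> k = i - n then 1 else 0)"

lemma stack3_dims[simp]: "dim_row (stack3 n X U Y) = 3*n" "dim_col (stack3 n X U Y) = n"
  by (simp_all add: stack3_def)
lemma stack3_c[simp]: "stack3 n X U Y \<in> carrier_mat (3*n) n"
  by (rule carrier_matI) simp_all
lemma bd3_dims[simp]: "dim_row (bd3 n a b c) = 3*n" "dim_col (bd3 n a b c) = 3*n"
  by (simp_all add: bd3_def)
lemma bd3_c[simp]: "bd3 n a b c \<in> carrier_mat (3*n) (3*n)"
  by (rule carrier_matI) simp_all
lemma shK_dims[simp]: "dim_row (shK n) = 3*n" "dim_col (shK n) = 3*n"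
  by (simp_all add: shK_def)
lemma shK_c[simp]: "shK n \<in> carrier_mat (3*n) (3*n)"
  by (rule carrier_matI) simp_all

lemma sum3: fixes n :: nat shows "(\<Sum>k\<in>{0..<3*n}. f k) = (\<Sum>k<n. f k) + (\<Sum>k<n. f (k+n)) + (\<Sum>k<n. f (k+2*n))"
proof -
  have a: "(\<Sum>k\<in>{0..<3*n}. f k) = (\<Sum>k\<in>{0..<2*n}. f k) + (\<Sum>k\<in>{2*n..<3*n}. f k)"
    by (rule sum.atLeastLessThan_concat[symmetric]) auto
  have b: "(\<Sum>k\<in>{0..<2*n}. f k) = (\<Sum>k\<in>{0..<n}. f k) + (\<Sum>k\<in>{n..<2*n}. f k)"
    by (rule sum.atLeastLessThan_concat[symmetric]) auto
  have "(\<Sum>k\<in>{0..<3*n}. f k) = (\<Sum>k\<in>{0..<n}. f k) + (\<Sum>k\<in>{n..<2*n}. f k) + (\<Sum>k\<in>{2*n..<3*n}. f k)"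
    unfolding a b ..
  also have "(\<Sum>k\<in>{n..<2*n}. f k) = (\<Sum>k<n. f (k+n))"
    using sum.shift_bounds_nat_ivl[of f 0 n n] by (simp add: lessThan_atLeast0 mult_2)
  also have "(\<Sum>k\<in>{2*n..<3*n}. f k) = (\<Sum>k<n. f (k+2*n))"
    using sum.shift_bounds_nat_ivl[of f 0 "2*n" n] by (simp add: lessThan_atLeast0 add.commute)
  finally show ?thesis by (simp add: lessThan_atLeast0)
qed

lemma bd3_mult:
  assumes "a \<in> carrier_mat n n" "b \<in> carrier_mat n n" "c \<in> carrier_mat n n"
    "X \<in> carrier_mat n n" "U \<in> carrier_mat n n" "Y \<in> carrier_mat n n"
  shows "bd3 n a b c * stack3 n X U Y = stack3 n (a * X) (b * U) (c * Y)"
proof (rule eq_matI)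
  fix i j assume "i < dim_row (stack3 n (a * X) (b * U) (c * Y))" "j < dim_col (stack3 n (a * X) (b * U) (c * Y))"
  hence ij: "i < 3*n" "j < n" by auto
  have e: "(bd3 n a b c * stack3 n X U Y) $$ (i,j) = (\<Sum>k\<in>{0..<3*n}. bd3 n a b c $$ (i,k) * stack3 n X U Y $$ (k,j))"
    using ij by (simp add: scalar_prod_def)
  show "(bd3 n a b c * stack3 n X U Y) $$ (i,j) = stack3 n (a * X) (b * U) (c * Y) $$ (i,j)"
    unfolding e sum3 using ij assms
    by (auto simp: bd3_def stack3_def scalar_prod_def lessThan_atLeast0)
qed auto

lemma shK_mult:
  assumes "X \<in> carrier_mat n n" "U \<in> carrier_mat n n" "Y \<in> carrier_mat n n"
  shows "shK n * stack3 n X U Y = stack3 n (0\<^sub>m n n) X (0\<^sub>m n n)"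
proof (rule eq_matI)
  fix i j assume "i < dim_row (stack3 n (0\<^sub>m n n) X (0\<^sub>m n n))" "j < dim_col (stack3 n (0\<^sub>m n n) X (0\<^sub>m n n))"
  hence ij: "i < 3*n" "j < n" by auto
  have e: "(shK n * stack3 n X U Y) $$ (i,j) = (\<Sum>k\<in>{0..<3*n}. shK n $$ (i,k) * stack3 n X U Y $$ (k,j))"
    using ij by (simp add: scalar_prod_def)
  show "(shK n * stack3 n X U Y) $$ (i,j) = stack3 n (0\<^sub>m n n) X (0\<^sub>m n n) $$ (i,j)"
    unfolding e sum3 using ij assms
    by (auto simp: shK_def stack3_def if_distrib[of "\<lambda>x. x * _"] sum.delta' cong: if_cong)
qed auto

lemma stackT_mult:
  assumes "X \<in> carrier_mat n n" "U \<in> carrier_mat n n" "Y \<in> carrier_mat n n"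
    "X' \<in> carrier_mat n n" "U' \<in> carrier_mat n n" "Y' \<in> carrier_mat n n"
  shows "(stack3 n X U Y)\<^sup>T * stack3 n X' U' Y' = X\<^sup>T * X' + U\<^sup>T * U' + Y\<^sup>T * Y'"
proof (rule eq_matI)
  fix i j assume "i < dim_row (X\<^sup>T * X' + U\<^sup>T * U' + Y\<^sup>T * Y')" "j < dim_col (X\<^sup>T * X' + U\<^sup>T * U' + Y\<^sup>T * Y')"
  hence ij: "i < n" "j < n" using assms by auto
  have e: "((stack3 n X U Y)\<^sup>T * stack3 n X' U' Y') $$ (i,j) = (\<Sum>k\<in>{0..<3*n}. stack3 n X U Y $$ (k,i) * stack3 n X' U' Y' $$ (k,j))"
    using ij by (simp add: scalar_prod_def)
  show "((stack3 n X U Y)\<^sup>T * stack3 n X' U' Y') $$ (i,j) = (X\<^sup>T * X' + U\<^sup>T * U' + Y\<^sup>T * Y') $$ (i,j)"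
    unfolding e sum3 using ij assms
    by (auto simp: stack3_def scalar_prod_def lessThan_atLeast0)
qed (use assms in auto)

lemma stack_mult:
  assumes "X \<in> carrier_mat n n" "U \<in> carrier_mat n n" "Y \<in> carrier_mat n n" "D \<in> carrier_mat n n"
  shows "stack3 n X U Y * D = stack3 n (X * D) (U * D) (Y * D)"
proof (rule eq_matI)
  fix i j assume "i < dim_row (stack3 n (X * D) (U * D) (Y * D))" "j < dim_col (stack3 n (X * D) (U * D) (Y * D))"
  hence ij: "i < 3*n" "j < n" by auto
  show "(stack3 n X U Y * D) $$ (i,j) = stack3 n (X * D) (U * D) (Y * D) $$ (i,j)"
    using ij assms by (auto simp: stack3_def scalar_prod_def row_def)
qed (use assms in auto)

lemma stack_add:
  assumes "X \<in> carrier_mat n n" "U \<in> carrier_mat n n" "Y \<in> carrier_mat n n"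
    "X' \<in> carrier_mat n n" "U' \<in> carrier_mat n n" "Y' \<in> carrier_mat n n"
  shows "stack3 n X U Y + stack3 n X' U' Y' = stack3 n (X + X') (U + U') (Y + Y')"
  by (rule eq_matI) (use assms in \<open>auto simp: stack3_def\<close>)


lemma layer:
  assumes X: "X \<in> carrier_mat n n" and Y: "Y \<in> carrier_mat n n"
    and P: "P \<in> carrier_mat n n" and Q: "Q \<in> carrier_mat n n"
  shows "tf_layer (bd3 n (1\<^sub>m n) (0\<^sub>m n n) P) (1\<^sub>m (3*n)) (shK n) (bd3 n (- 1\<^sub>m n) (0\<^sub>m n n) (- Q))
           (stack3 n X (1\<^sub>m n) Y) = stack3 n (X * X) (1\<^sub>m n) (Y - Q * Y + P * Y * X)"
proof -
  let ?Z = "stack3 n X (1\<^sub>m n) Y"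
  let ?WV = "bd3 n (1\<^sub>m n) (0\<^sub>m n n) P"
  let ?WK = "shK n"
  let ?WR = "bd3 n (- 1\<^sub>m n) (0\<^sub>m n n) (- Q)"
  have Zc: "?Z \<in> carrier_mat (3*n) n" by simp
  have ZT: "?Z\<^sup>T \<in> carrier_mat n (3*n)" by simp
  have T: "?WV * ?Z = stack3 n X (0\<^sub>m n n) (P * Y)"
    using bd3_mult[of "1\<^sub>m n" n "0\<^sub>m n n" P X "1\<^sub>m n" Y] X Y P by simp
  have KZ: "?WK * ?Z = stack3 n (0\<^sub>m n n) X (0\<^sub>m n n)" using shK_mult[of X n "1\<^sub>m n" Y] X Y by simp
  have ZKZ: "?Z\<^sup>T * (?WK * ?Z) = X"
  proof -
    have "?Z\<^sup>T * (?WK * ?Z) = X\<^sup>T * 0\<^sub>m n n + (1\<^sub>m n)\<^sup>T * X + Y\<^sup>T * 0\<^sub>m n n"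
      unfolding KZ by (rule stackT_mult) (use X Y in auto)
    also have "\<dots> = X" by (rule eq_matI) (use X Y in auto)
    finally show ?thesis .
  qed
  have WVc: "?WV * ?Z \<in> carrier_mat (3*n) n" by (rule mult_carrier_mat[OF bd3_c stack3_c])
  have "?WV * ?Z * ?Z\<^sup>T * (1\<^sub>m (3*n))\<^sup>T * ?WK * ?Z = ?WV * ?Z * ?Z\<^sup>T * ?WK * ?Z"
    by simp
  also have "\<dots> = (?WV * ?Z) * (?Z\<^sup>T * (?WK * ?Z))"
  proof -
    have ZK: "?Z\<^sup>T * ?WK \<in> carrier_mat n (3*n)" by (rule mult_carrier_mat[OF ZT shK_c])
    show ?thesis
      by (simp only: assoc_mult_mat[OF WVc ZT shK_c] assoc_mult_mat[OF WVc ZK Zc] assoc_mult_mat[OF ZT shK_c Zc])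
  qed
  also have "\<dots> = stack3 n (X * X) (0\<^sub>m n n * X) (P * Y * X)"
    unfolding ZKZ T by (rule stack_mult) (use X Y P in auto)
  finally have mid: "?WV * ?Z * ?Z\<^sup>T * (1\<^sub>m (3*n))\<^sup>T * ?WK * ?Z = stack3 n (X * X) (0\<^sub>m n n * X) (P * Y * X)" .
  have R: "?WR * ?Z = stack3 n (- 1\<^sub>m n * X) (0\<^sub>m n n * 1\<^sub>m n) (- Q * Y)"
    by (rule bd3_mult) (use X Y Q in auto)
  have "tf_layer ?WV (1\<^sub>m (3*n)) ?WK ?WR ?Z =
      ?Z + stack3 n (X * X) (0\<^sub>m n n * X) (P * Y * X) + stack3 n (- 1\<^sub>m n * X) (0\<^sub>m n n * 1\<^sub>m n) (- Q * Y)"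
    unfolding tf_layer_def mid R ..
  also have "\<dots> = stack3 n (X + X * X + - 1\<^sub>m n * X) (1\<^sub>m n + 0\<^sub>m n n * X + 0\<^sub>m n n * 1\<^sub>m n) (Y + P * Y * X + - Q * Y)"
    using X Y P Q by (simp add: stack_add)
  also have "\<dots> = stack3 n (X * X) (1\<^sub>m n) (Y - Q * Y + P * Y * X)"
  proof -
    have "X + X * X + - 1\<^sub>m n * X = X * X" using X by (rule_tac eq_matI) (auto simp: uminus_mult_left_mat)
    moreover have "1\<^sub>m n + 0\<^sub>m n n * X + 0\<^sub>m n n * 1\<^sub>m n = (1\<^sub>m n :: real mat)" using X by (rule_tac eq_matI) auto
    moreover have "Y + P * Y * X + - Q * Y = Y - Q * Y + P * Y * X" using X Y P Q
      by (rule_tac eq_matI) (auto simp: uminus_mult_left_mat)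
    ultimately show ?thesis by simp
  qed
  finally show ?thesis .
qed


lemma centering_sym: "(centering_mat n)\<^sup>T = centering_mat n"
  by (rule eq_matI) (auto simp: centering_mat_def)

context lapc begin

lemma P_centering: "centering_mat n = P" unfolding centering_mat_def P_def Q_def ..

fun Mp :: "nat \<Rightarrow> real mat" where
  "Mp 0 = M"
| "Mp (Suc l) = Mp l * Mp l"

lemma Mpc[simp]: "Mp l \<in> carrier_mat n n" by (induction l) auto
lemma Mpdims[simp]: "dim_row (Mp l) = n" "dim_col (Mp l) = n" using carrier_matD[OF Mpc] by auto

lemma MpP: "Mp l * P = P * Mp l"
proof (induction l)
  case 0 thus ?case using MP by simp
next
  case (Suc l)
  have "Mp l * Mp l * P = Mp l * (Mp l * P)" by (simp add: am)
  also have "\<dots> = Mp l * (P * Mp l)" using Suc by simp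
  also have "\<dots> = (Mp l * P) * Mp l" by (simp add: am)
  also have "\<dots> = P * Mp l * Mp l" using Suc by (simp add: am)
  finally show ?case by (simp add: am)
qed

fun Ys :: "nat \<Rightarrow> real mat" where
  "Ys 0 = \<delta> \<cdot>\<^sub>m 1\<^sub>m n"
| "Ys (Suc l) = Ys l - Q * Ys l + P * Ys l * (P * Mp l)"

lemma Ysc[simp]: "Ys l \<in> carrier_mat n n" by (induction l) auto
lemma Ysdims[simp]: "dim_row (Ys l) = n" "dim_col (Ys l) = n" using carrier_matD[OF Ysc] by auto

lemma Ys_P: "Ys l - Q * Ys l = P * Ys l"
  unfolding P_def by (simp add: dm)

lemma Ys_inv: "P * Ys l = G - G * Mp l"
proof (induction l)
  case 0
  have "P * Ys 0 = \<delta> \<cdot>\<^sub>m P" by (simp add: dm)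
  also have "\<dots> = G - G * M" using G_GM by simp
  finally show ?case by simp
next
  case (Suc l)
  define W where "W = P * Ys l"
  have Wc: "W \<in> carrier_mat n n" unfolding W_def by simp
  have W: "W = G - G * Mp l" unfolding W_def using Suc .
  have WP: "W * P = W"
  proof -
    have "W * P = G * P - G * Mp l * P" unfolding W by (simp add: dm)
    also have "G * Mp l * P = G * P * Mp l" using MpP by (simp add: am)
    finally show ?thesis unfolding W using GP by simp
  qed
  have "P * Ys (Suc l) = P * (W + W * (P * Mp l))"
    by (simp add: Ys_P W_def)
  also have "\<dots> = P * W + P * W * (P * Mp l)" using Wc by (simp add: dm am)
  also have "P * W = W" unfolding W_def using PP by (simp add: am[symmetric])
  also have "W * (P * Mp l) = W * Mp l" using WP Wc by (simp add: am[symmetric])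
  also have "W + W * Mp l = G - G * Mp (Suc l)" unfolding W
    by (simp add: dm am) (rule eq_matI; simp)
  finally show ?case by simp
qed

lemma Ys_Suc_P: "P * Ys (Suc l) = Ys (Suc l)"
proof -
  have "Ys (Suc l) = P * Ys l + P * Ys l * (P * Mp l)" by (simp add: Ys_P)
  moreover have "P * (P * Ys l + P * Ys l * (P * Mp l)) = P * Ys l + P * Ys l * (P * Mp l)"
    using PP by (simp add: dm am[symmetric])
  ultimately show ?thesis by simp
qed

lemma Ys_final: "L' \<ge> 1 \<Longrightarrow> Ys L' = G - G * Mp L'"
  using Ys_Suc_P[of "L' - 1"] Ys_inv[of L'] by simp

abbreviation "WV \<equiv> (\<lambda>_::nat. bd3 n (1\<^sub>m n) (0\<^sub>m n n) P)"
abbreviation "WQ \<equiv> (\<lambda>_::nat. 1\<^sub>m (3*n) :: real mat)"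
abbreviation "WK \<equiv> (\<lambda>_::nat. shK n)"
abbreviation "WR \<equiv> (\<lambda>_::nat. bd3 n (- 1\<^sub>m n) (0\<^sub>m n n) (- Q))"

lemma input: "tf_input n \<delta> L = stack3 n (P * M) (1\<^sub>m n) (\<delta> \<cdot>\<^sub>m 1\<^sub>m n)"
proof -
  have A: "P * M = centering_mat n - \<delta> \<cdot>\<^sub>m L" unfolding P_centering M_def by (simp add: dm PL)
  have sT: "(\<delta> \<cdot>\<^sub>m L)\<^sup>T = \<delta> \<cdot>\<^sub>m L\<^sup>T" by (rule eq_matI) auto
  have As: "(P * M)\<^sup>T = P * M" unfolding A P_centering
    by (simp add: transpose_minus[of _ n n] PT Ls sT)
  show ?thesis
  proof (rule eq_matI)
    fix i j assume "i < dim_row (stack3 n (P * M) (1\<^sub>m n) (\<delta> \<cdot>\<^sub>m 1\<^sub>m n))" "j < dim_col (stack3 n (P * M) (1\<^sub>m n) (\<delta> \<cdot>\<^sub>m 1\<^sub>m n))"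
    hence ij: "i < 3*n" "j < n" by auto
    have s: "(P * M) $$ (j, i) = (P * M) $$ (i, j)" if "i < n"
      using arg_cong[OF As, of "\<lambda>A. A $$ (i,j)"] that ij by simp
    show "tf_input n \<delta> L $$ (i, j) = stack3 n (P * M) (1\<^sub>m n) (\<delta> \<cdot>\<^sub>m 1\<^sub>m n) $$ (i, j)"
      using ij s unfolding tf_input_def stack3_def A[symmetric] by auto
  qed (auto simp: tf_input_def)
qed

lemma run: "tf_run WV WQ WK WR l (tf_input n \<delta> L) = stack3 n (P * Mp l) (1\<^sub>m n) (Ys l)"
proof (induction l)
  case 0 thus ?case using input by simp
next
  case (Suc l)
  have "tf_run WV WQ WK WR (Suc l) (tf_input n \<delta> L) = stack3 n (P * Mp l * (P * Mp l)) (1\<^sub>m n) (Ys (Suc l))"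
    using Suc by (simp add: layer)
  also have "P * Mp l * (P * Mp l) = P * Mp (Suc l)"
  proof -
    have "P * Mp l * (P * Mp l) = P * (Mp l * P) * Mp l" by (simp add: am)
    also have "\<dots> = P * P * Mp l * Mp l" using MpP by (simp add: am)
    finally show ?thesis using PP by (simp add: am)
  qed
  finally show ?case .
qed

lemma row_block_stack: "row_block (2*n+1) (3*n) (stack3 n X U Y) = (Y :: real mat)" if "Y \<in> carrier_mat n n"
  using that by (intro eq_matI) (auto simp: row_block_def stack3_def)

lemma error_eq: assumes "L' \<ge> 1"
  shows "row_block (2*n+1) (3*n) (tf_run WV WQ WK WR L' (tf_input n \<delta> L)) - pinv L = - (G * Mp L')"
proof -
  have "row_block (2*n+1) (3*n) (tf_run WV WQ WK WR L' (tf_input n \<delta> L)) = Ys L'"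
    unfolding run by (rule row_block_stack[OF Ysc])
  thus ?thesis unfolding pinv_L Ys_final[OF assms] by (intro eq_matI) auto
qed

end


lemma disc: fixes p b q :: real assumes p: "p \<ge> 0" and h: "\<And>s. 0 \<le> p*s*s + 2*b*s + q"
  shows "b*b \<le> p*q"
proof (cases "p = 0")
  case True
  have "b = 0"
  proof (rule ccontr)
    assume b: "b \<noteq> 0"
    have "0 \<le> 2*b*(-(\<bar>q\<bar>+1)/(2*b)) + q" using h[of "-(\<bar>q\<bar>+1)/(2*b)"] True by simp
    also have "2*b*(-(\<bar>q\<bar>+1)/(2*b)) = -(\<bar>q\<bar>+1)" using b by (simp add: field_simps)
    finally show False by linarith
  qed
  thus ?thesis using True by simp
next
  case False
  hence pp: "p > 0" using p by simp
  have "0 \<le> p*(-b/p)*(-b/p) + 2*b*(-b/p) + q" by (rule h)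
  also have "p*(-b/p)*(-b/p) + 2*b*(-b/p) + q = q - b*b/p" using pp by (simp add: field_simps)
  finally have "b*b/p \<le> q" by simp
  thus ?thesis using pp by (simp add: field_simps mult.commute)
qed

lemma cauchy_schwarz_vec: assumes a: "a \<in> carrier_vec n" and b: "b \<in> carrier_vec n"
  shows "(a \<bullet> b) * (a \<bullet> (b::real vec)) \<le> (a \<bullet> a) * (b \<bullet> b)"
proof -
  note vs = scalar_prod_add_distrib[where n=n] add_scalar_prod_distrib[where n=n]
    scalar_prod_smult_distrib[where n=n] smult_scalar_prod_distrib[where n=n]
  have "0 \<le> (a \<bullet> a)*s*s + 2*(a \<bullet> b)*s + b \<bullet> b" for s
  proof -
    have "0 \<le> (s \<cdot>\<^sub>v a + b) \<bullet> (s \<cdot>\<^sub>v a + b)" by (rule vsq_nonneg)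
    also have "\<dots> = (a \<bullet> a)*s*s + 2*(a \<bullet> b)*s + b \<bullet> b"
      using a b comm_scalar_prod[OF a b] by (simp add: vs algebra_simps)
    finally show ?thesis .
  qed
  from disc[OF vsq_nonneg this] show ?thesis .
qed

lemma contract:
  fixes T :: "real mat"
  assumes T: "T \<in> carrier_mat n n" and Ts: "T\<^sup>T = T"
  and Vinv: "\<And>x. x \<in> carrier_vec n \<Longrightarrow> onev n \<bullet> x = 0 \<Longrightarrow> onev n \<bullet> (T *\<^sub>v x) = 0"
  and bnd: "\<And>x. x \<in> carrier_vec n \<Longrightarrow> onev n \<bullet> x = 0 \<Longrightarrow> 0 \<le> x \<bullet> (T *\<^sub>v x) \<and> x \<bullet> (T *\<^sub>v x) \<le> c * (x \<bullet> x)"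
  and u: "u \<in> carrier_vec n" "onev n \<bullet> u = 0" and c: "c \<ge> 0"
  shows "(T *\<^sub>v u) \<bullet> (T *\<^sub>v u) \<le> c^2 * (u \<bullet> u)"
proof -
  note vs = scalar_prod_add_distrib[where n=n] add_scalar_prod_distrib[where n=n]
    scalar_prod_smult_distrib[where n=n] smult_scalar_prod_distrib[where n=n]
    mult_add_distrib_mat_vec[OF T] mult_mat_vec[OF T]
  define w where "w = T *\<^sub>v u"
  have w: "w \<in> carrier_vec n" "onev n \<bullet> w = 0" unfolding w_def using T u Vinv by auto
  define b where "b = w \<bullet> w"
  define p where "p = u \<bullet> (T *\<^sub>v u)"
  define q where "q = w \<bullet> (T *\<^sub>v w)"
  have uTw: "u \<bullet> (T *\<^sub>v w) = b" unfolding b_def using sym_sprod[OF T Ts u(1) w(1)] w_def by simp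
  have wTu: "w \<bullet> (T *\<^sub>v u) = b" unfolding b_def w_def ..
  have h: "0 \<le> p*s*s + 2*b*s + q" for s
  proof -
    define x where "x = s \<cdot>\<^sub>v u + w"
    have x: "x \<in> carrier_vec n" "onev n \<bullet> x = 0" unfolding x_def using u w by (auto simp: vs)
    have "x \<bullet> (T *\<^sub>v x) = p*s*s + 2*b*s + q"
      unfolding x_def p_def q_def using u w T uTw wTu by (simp add: vs algebra_simps)
    thus ?thesis using bnd[OF x] by simp
  qed
  have p0: "p \<ge> 0" unfolding p_def using bnd[OF u] by simp
  have pb: "p \<le> c * (u \<bullet> u)" unfolding p_def using bnd[OF u] by simp
  have qb: "q \<le> c * b" unfolding q_def b_def using bnd[OF w] by simp
  have q0: "q \<ge> 0" unfolding q_def using bnd[OF w] by simp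
  have bb: "b*b \<le> p*q" by (rule disc[OF p0 h])
  also have "\<dots> \<le> (c * (u \<bullet> u)) * (c * b)" using p0 q0 pb qb by (intro mult_mono) auto
  finally have bb': "b * b \<le> (c^2 * (u \<bullet> u)) * b" by (simp add: power2_eq_square algebra_simps)
  have b0: "b \<ge> 0" unfolding b_def by (rule vsq_nonneg)
  show ?thesis
  proof (cases "b = 0")
    case True thus ?thesis using c vsq_nonneg[of u] unfolding b_def w_def by simp
  next
    case False
    hence "b > 0" using b0 by simp
    with bb' have "b \<le> c^2 * (u \<bullet> u)" by (simp add: mult_le_cancel_right)
    thus ?thesis unfolding b_def w_def .
  qed
qed


lemma const_zero: assumes v: "v \<in> carrier_vec n" and c: "\<And>i. i < n \<Longrightarrow> v $ i = v $ 0"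
  and s: "onev n \<bullet> v = 0" and n: "n \<ge> 1" shows "v = 0\<^sub>v n"
proof -
  have "onev n \<bullet> v = (\<Sum>i<n. v $ i)" by (rule onev_sprod[OF v])
  also have "\<dots> = (\<Sum>i<n. v $ 0)" by (rule sum.cong) (auto intro: c)
  also have "\<dots> = real n * v $ 0" by simp
  finally have "v $ 0 = 0" using s n by simp
  show ?thesis
  proof (rule eq_vecI)
    fix i assume "i < dim_vec (0\<^sub>v n :: real vec)"
    hence "i < n" by simp
    thus "v $ i = 0\<^sub>v n $ i" using c[of i] \<open>v $ 0 = 0\<close> by simp
  qed (use v in simp)
qed

lemma onev_onev: "onev n \<bullet> onev n = real n"
  by (simp add: onev_def scalar_prod_def)

context lapc begin

lemmas cv[simp] = mult_mat_vec_carrier[where nr=n and n=n]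
lemmas amv[simp] = assoc_mult_mat_vec[where n\<^sub>1=n and n\<^sub>2=n and n\<^sub>3=n]

lemma onev_L: "x \<in> carrier_vec n \<Longrightarrow> onev n \<bullet> (L *\<^sub>v x) = 0"
  using sym_sprod[OF Lc Ls onev_carrier, of x] L1 by simp

lemma M_vec: "x \<in> carrier_vec n \<Longrightarrow> M *\<^sub>v x = x - \<delta> \<cdot>\<^sub>v (L *\<^sub>v x)"
proof -
  assume x: "x \<in> carrier_vec n"
  have "M *\<^sub>v x = 1\<^sub>m n *\<^sub>v x - (\<delta> \<cdot>\<^sub>m L) *\<^sub>v x"
    unfolding M_def using x by (simp add: minus_mult_distrib_mat_vec[of _ n n])
  also have "(\<delta> \<cdot>\<^sub>m L) *\<^sub>v x = \<delta> \<cdot>\<^sub>v (L *\<^sub>v x)"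
    using x by (intro eq_vecI) (auto simp: scalar_prod_def sum_distrib_left ac_simps)
  finally show ?thesis using x by simp
qed

lemma L_entry_sym: "i < n \<Longrightarrow> j < n \<Longrightarrow> L $$ (j, i) = L $$ (i, j)"
  using arg_cong[OF Ls, of "\<lambda>A. A $$ (i,j)"] by simp

lemma MT: "M\<^sup>T = M"
  unfolding M_def by (rule eq_matI) (auto simp: L_entry_sym)

lemma onev_M: "x \<in> carrier_vec n \<Longrightarrow> onev n \<bullet> x = 0 \<Longrightarrow> onev n \<bullet> (M *\<^sub>v x) = 0"
  unfolding M_vec by (simp add: scalar_prod_minus_distrib[where n=n] scalar_prod_smult_distrib[where n=n] onev_L)

lemma Mp_vec: "Mp (Suc l) *\<^sub>v x = Mp l *\<^sub>v (Mp l *\<^sub>v x)" if "x \<in> carrier_vec n"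
  using that by simp

lemma onev_Mp: "x \<in> carrier_vec n \<Longrightarrow> onev n \<bullet> x = 0 \<Longrightarrow> onev n \<bullet> (Mp l *\<^sub>v x) = 0"
proof (induction l arbitrary: x)
  case 0 thus ?case using onev_M by simp
next
  case (Suc l)
  have "onev n \<bullet> (Mp l *\<^sub>v x) = 0" using Suc.IH[OF Suc.prems] .
  thus ?case unfolding Mp_vec[OF Suc.prems(1)] using Suc.IH[of "Mp l *\<^sub>v x"] Suc.prems by simp
qed

lemma onev_G: assumes x: "x \<in> carrier_vec n" shows "onev n \<bullet> (G *\<^sub>v x) = 0"
proof -
  have "Q *\<^sub>v (G *\<^sub>v x) = (Q * G) *\<^sub>v x" using assoc_mult_mat_vec[OF Qc Gc x] by simp
  also have "\<dots> = 0\<^sub>v n" unfolding QG using x by (intro eq_vecI) (auto simp: scalar_prod_def)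
  finally have "((onev n \<bullet> (G *\<^sub>v x)) / real n) \<cdot>\<^sub>v onev n = 0\<^sub>v n" using Q_vec[OF mult_mat_vec_carrier[OF Gc x]] by simp
  hence "(((onev n \<bullet> (G *\<^sub>v x)) / real n) \<cdot>\<^sub>v onev n) $ 0 = 0" using n1 by simp
  thus ?thesis using n1 by (simp add: onev_def)
qed

lemma P_vec: "x \<in> carrier_vec n \<Longrightarrow> onev n \<bullet> x = 0 \<Longrightarrow> P *\<^sub>v x = x"
  unfolding P_def by (simp add: minus_mult_distrib_mat_vec[of _ n n] Q_vec) (intro eq_vecI; simp add: onev_def)

lemma LG_vec: "u \<in> carrier_vec n \<Longrightarrow> onev n \<bullet> u = 0 \<Longrightarrow> L *\<^sub>v (G *\<^sub>v u) = u"
  using LG P_vec by (simp flip: assoc_mult_mat_vec[of _ n n _ n])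

lemma onev_P: assumes v: "v \<in> carrier_vec n" shows "onev n \<bullet> (P *\<^sub>v v) = 0"
proof -
  have "P *\<^sub>v v = v - Q *\<^sub>v v" unfolding P_def using v by (simp add: minus_mult_distrib_mat_vec[of _ n n])
  hence "onev n \<bullet> (P *\<^sub>v v) = onev n \<bullet> v - ((onev n \<bullet> v) / real n) * (onev n \<bullet> onev n)"
    using v by (simp add: Q_vec scalar_prod_minus_distrib[where n=n] scalar_prod_smult_distrib[where n=n])
  thus ?thesis using n1 by (simp add: onev_onev)
qed

lemma P_norm: assumes v: "v \<in> carrier_vec n" shows "(P *\<^sub>v v) \<bullet> (P *\<^sub>v v) \<le> v \<bullet> v"
proof -
  have "(P *\<^sub>v v) \<bullet> (P *\<^sub>v v) = v \<bullet> (P *\<^sub>v (P *\<^sub>v v))"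
    using sym_sprod[OF Pc PT v mult_mat_vec_carrier[OF Pc v]] by simp
  also have "P *\<^sub>v (P *\<^sub>v v) = P *\<^sub>v v" using PP v by (simp flip: assoc_mult_mat_vec[of _ n n _ n])
  also have "v \<bullet> (P *\<^sub>v v) = v \<bullet> v - v \<bullet> (Q *\<^sub>v v)"
    unfolding P_def using v by (simp add: minus_mult_distrib_mat_vec[of _ n n] scalar_prod_minus_distrib[OF v v mult_mat_vec_carrier[OF Qc v]])
  also have "\<dots> \<le> v \<bullet> v" using Q_quad[OF v] by simp
  finally show ?thesis .
qed

end


context lapc begin

lemma eig_iff: "eigenvalue L \<mu> \<longleftrightarrow> (\<exists>v. v \<in> carrier_vec n \<and> v \<noteq> 0\<^sub>v n \<and> L *\<^sub>v v = \<mu> \<cdot>\<^sub>v v)"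
  by (simp add: eigenvalue_def eigenvector_def)

lemma zero_quad: "0\<^sub>v n \<bullet> (L *\<^sub>v 0\<^sub>v n) = 0" by simp

lemma main_bound:
  assumes d: "\<delta> > 0" and Lge: "L' \<ge> 1"
  and e1: "eigenvalue L lmin" and e2: "lmin \<noteq> 0" and e3: "\<forall>\<mu>. eigenvalue L \<mu> \<and> \<mu> \<noteq> 0 \<longrightarrow> lmin \<le> \<mu>"
  and e4: "eigenvalue L lmax" and e5: "\<forall>\<mu>. eigenvalue L \<mu> \<longrightarrow> \<mu> \<le> lmax" and e6: "lmax \<le> 1 / \<delta>"
  shows "spec_norm (row_block (2*n+1) (3*n) (tf_run WV WQ WK WR L' (tf_input n \<delta> L)) - pinv L)
           \<le> (1 / lmin) * exp (- \<delta> * 2 ^ L' * lmin)"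
proof -
  note vs = scalar_prod_add_distrib[where n=n] add_scalar_prod_distrib[where n=n]
    scalar_prod_smult_distrib[where n=n] smult_scalar_prod_distrib[where n=n]
  have lmin_pos: "lmin > 0"
  proof -
    obtain v where v: "v \<in> carrier_vec n" "v \<noteq> 0\<^sub>v n" "L *\<^sub>v v = lmin \<cdot>\<^sub>v v" using e1 eig_iff by blast
    have "v \<bullet> (L *\<^sub>v v) = lmin * (v \<bullet> v)" using v by (simp add: vs)
    moreover have "v \<bullet> v > 0" using vsq_nonneg[of v] vsq_zero[OF v(1)] v(2) by force
    moreover have "0 \<le> v \<bullet> (L *\<^sub>v v)" by (rule Lpsd[OF v(1)])
    ultimately have "lmin \<ge> 0" by (simp add: zero_le_mult_iff)
    thus ?thesis using e2 by simp
  qed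
  have lo: "lmin * (x \<bullet> x) \<le> x \<bullet> (L *\<^sub>v x)" if x: "x \<in> carrier_vec n" "onev n \<bullet> x = 0" for x
  proof (cases "x = 0\<^sub>v n")
    case True thus ?thesis by simp
  next
    case False
    obtain w m where w: "w \<in> carrier_vec n" "w \<noteq> 0\<^sub>v n" "onev n \<bullet> w = 0" "L *\<^sub>v w = m \<cdot>\<^sub>v w"
      and am: "\<forall>y\<in>carrier_vec n. onev n \<bullet> y = 0 \<longrightarrow> m * (y \<bullet> y) \<le> y \<bullet> (L *\<^sub>v y)"
      using rayleigh[OF Lc Ls L1 x(1) False x(2)] by blast
    have "m \<noteq> 0"
    proof
      assume m0: "m = 0"
      hence q: "w \<bullet> (L *\<^sub>v w) = 0" using w by (simp add: vs)
      have "w $ i = w $ 0" if "i < n" for i by (rule Lker[OF w(1) q that]) (use n1 in simp)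
      hence "w = 0\<^sub>v n" using const_zero[OF w(1) _ w(3) n1] by blast
      thus False using w(2) by simp
    qed
    moreover have "eigenvalue L m" using w eig_iff by blast
    ultimately have "lmin \<le> m" using e3 by blast
    hence "lmin * (x \<bullet> x) \<le> m * (x \<bullet> x)" using vsq_nonneg[of x] by (intro mult_right_mono)
    also have "\<dots> \<le> x \<bullet> (L *\<^sub>v x)" using am x by blast
    finally show ?thesis .
  qed
  have hi: "x \<bullet> (L *\<^sub>v x) \<le> lmax * (x \<bullet> x)" if x: "x \<in> carrier_vec n" "onev n \<bullet> x = 0" for x
  proof (cases "x = 0\<^sub>v n")
    case True thus ?thesis by simp
  next
    case False
    have S: "- L \<in> carrier_mat n n" by simp
    have ST: "(- L)\<^sup>T = - L" using Ls by (simp add: transpose_uminus)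
    have S1: "(- L) *\<^sub>v onev n = 0\<^sub>v n" using L1 by (simp add: uminus_mult_mat_vec)
    obtain w m where w: "w \<in> carrier_vec n" "w \<noteq> 0\<^sub>v n" "onev n \<bullet> w = 0" "(- L) *\<^sub>v w = m \<cdot>\<^sub>v w"
      and am: "\<forall>y\<in>carrier_vec n. onev n \<bullet> y = 0 \<longrightarrow> m * (y \<bullet> y) \<le> y \<bullet> ((- L) *\<^sub>v y)"
      using rayleigh[OF S ST S1 x(1) False x(2)] by blast
    have "L *\<^sub>v w = (- m) \<cdot>\<^sub>v w"
    proof -
      have "- (L *\<^sub>v w) = m \<cdot>\<^sub>v w" using w(4) w(1) by simp
      hence "L *\<^sub>v w = - (m \<cdot>\<^sub>v w)" by (metis uminus_uminus_vec)
      thus ?thesis by (intro eq_vecI) auto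
    qed
    hence "eigenvalue L (- m)" using w eig_iff by blast
    hence "- m \<le> lmax" using e5 by blast
    have "m * (x \<bullet> x) \<le> - (x \<bullet> (L *\<^sub>v x))" using am x by simp
    hence "x \<bullet> (L *\<^sub>v x) \<le> (- m) * (x \<bullet> x)" by simp
    also have "\<dots> \<le> lmax * (x \<bullet> x)" using \<open>- m \<le> lmax\<close> vsq_nonneg[of x] by (intro mult_right_mono)
    finally show ?thesis .
  qed
  have lml: "lmin \<le> lmax" using e1 e5 by blast
  have dlmax: "\<delta> * lmax \<le> 1" using e6 d by (simp add: field_simps)
  define c where "c = 1 - \<delta> * lmin"
  have "\<delta> * lmin \<le> \<delta> * lmax" using lml d by (intro mult_left_mono) auto
  hence c0: "c \<ge> 0" unfolding c_def using dlmax by simp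
  have Mq: "x \<bullet> (M *\<^sub>v x) = x \<bullet> x - \<delta> * (x \<bullet> (L *\<^sub>v x))" if "x \<in> carrier_vec n" for x
    using that by (simp add: M_vec scalar_prod_minus_distrib[where n=n] vs)
  have Mbnd: "0 \<le> x \<bullet> (M *\<^sub>v x) \<and> x \<bullet> (M *\<^sub>v x) \<le> c * (x \<bullet> x)"
    if x: "x \<in> carrier_vec n" "onev n \<bullet> x = 0" for x
  proof -
    have a: "\<delta> * (lmin * (x \<bullet> x)) \<le> \<delta> * (x \<bullet> (L *\<^sub>v x))" using lo[OF x] d by (intro mult_left_mono) auto
    have b: "\<delta> * (x \<bullet> (L *\<^sub>v x)) \<le> \<delta> * (lmax * (x \<bullet> x))" using hi[OF x] d by (intro mult_left_mono) auto
    have "(\<delta> * lmax) * (x \<bullet> x) \<le> 1 * (x \<bullet> x)" using dlmax vsq_nonneg[of x] by (rule mult_right_mono)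
    hence e: "\<delta> * (lmax * (x \<bullet> x)) \<le> x \<bullet> x" by (simp add: mult.assoc)
    show ?thesis unfolding Mq[OF x(1)] c_def using a b e by (simp add: algebra_simps)
  qed
  have Mc': "(M *\<^sub>v u) \<bullet> (M *\<^sub>v u) \<le> c^2 * (u \<bullet> u)" if u: "u \<in> carrier_vec n" "onev n \<bullet> u = 0" for u
    by (rule contract[OF Mc MT onev_M Mbnd u c0])
  have Mpb: "(Mp l *\<^sub>v u) \<bullet> (Mp l *\<^sub>v u) \<le> (c^(2^l))^2 * (u \<bullet> u)"
    if "u \<in> carrier_vec n" "onev n \<bullet> u = 0" for u l
    using that
  proof (induction l arbitrary: u)
    case 0 thus ?case using Mc' by simp
  next
    case (Suc l)
    let ?w = "Mp l *\<^sub>v u"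
    have w: "?w \<in> carrier_vec n" "onev n \<bullet> ?w = 0" using Suc.prems onev_Mp by auto
    have "(Mp (Suc l) *\<^sub>v u) \<bullet> (Mp (Suc l) *\<^sub>v u) = (Mp l *\<^sub>v ?w) \<bullet> (Mp l *\<^sub>v ?w)"
      using Suc.prems Mp_vec by simp
    also have "\<dots> \<le> (c^(2^l))^2 * (?w \<bullet> ?w)" by (rule Suc.IH[OF w])
    also have "\<dots> \<le> (c^(2^l))^2 * ((c^(2^l))^2 * (u \<bullet> u))"
      by (rule mult_left_mono[OF Suc.IH[OF Suc.prems]]) simp
    also have "\<dots> = (c^(2^Suc l))^2 * (u \<bullet> u)"
    proof -
      have "c^(2^Suc l) = c^(2^l) * c^(2^l)" by (simp add: mult_2 power_add)
      thus ?thesis by (simp add: power_mult_distrib)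
    qed
    finally show ?case .
  qed
  have Gb: "lmin^2 * ((G *\<^sub>v u) \<bullet> (G *\<^sub>v u)) \<le> u \<bullet> u" if u: "u \<in> carrier_vec n" "onev n \<bullet> u = 0" for u
  proof -
    let ?g = "G *\<^sub>v u"
    have g: "?g \<in> carrier_vec n" "onev n \<bullet> ?g = 0" using onev_G u by auto
    have Lg: "L *\<^sub>v ?g = u" by (rule LG_vec[OF u])
    have a: "lmin * (?g \<bullet> ?g) \<le> ?g \<bullet> u" using lo[OF g] Lg by simp
    have cs: "(?g \<bullet> u) * (?g \<bullet> u) \<le> (?g \<bullet> ?g) * (u \<bullet> u)" by (rule cauchy_schwarz_vec[OF g(1) u(1)])
    have a0: "0 \<le> lmin * (?g \<bullet> ?g)" using lmin_pos vsq_nonneg[of ?g] by simp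
    have "(lmin * (?g \<bullet> ?g)) * (lmin * (?g \<bullet> ?g)) \<le> (?g \<bullet> u) * (?g \<bullet> u)"
      using a a0 by (intro mult_mono) auto
    hence h: "(lmin^2 * (?g \<bullet> ?g)) * (?g \<bullet> ?g) \<le> (u \<bullet> u) * (?g \<bullet> ?g)"
      using cs by (simp add: power2_eq_square algebra_simps)
    show ?thesis
    proof (cases "?g \<bullet> ?g = 0")
      case True thus ?thesis using vsq_nonneg[of u] by simp
    next
      case False
      hence "?g \<bullet> ?g > 0" using vsq_nonneg[of ?g] by simp
      thus ?thesis using h by (simp add: mult_le_cancel_right)
    qed
  qed
  define E where "E = row_block (2*n+1) (3*n) (tf_run WV WQ WK WR L' (tf_input n \<delta> L)) - pinv L"
  have E: "E = - (G * Mp L')" unfolding E_def by (rule error_eq[OF Lge])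
  have GMpP: "G * Mp L' * P = G * Mp L'"
  proof -
    have "G * Mp L' * P = G * (Mp L' * P)" by (simp add: am)
    also have "\<dots> = G * (P * Mp L')" by (simp add: MpP)
    also have "\<dots> = (G * P) * Mp L'" by (simp add: am)
    finally show ?thesis by (simp add: GP)
  qed
  define B where "B = c^(2^L') / lmin"
  have B0: "B \<ge> 0" unfolding B_def using c0 lmin_pos by simp
  have vb: "sqrt ((E *\<^sub>v v) \<bullet> (E *\<^sub>v v)) \<le> B" if v: "v \<in> carrier_vec n" "v \<bullet> v = 1" for v
  proof -
    let ?p = "P *\<^sub>v v"
    let ?w = "Mp L' *\<^sub>v ?p"
    have p: "?p \<in> carrier_vec n" "onev n \<bullet> ?p = 0" using v onev_P by auto
    have w: "?w \<in> carrier_vec n" "onev n \<bullet> ?w = 0" using p onev_Mp by auto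
    have Ev: "E *\<^sub>v v = - (G *\<^sub>v ?w)"
    proof -
      have "E *\<^sub>v v = - ((G * Mp L') *\<^sub>v v)" unfolding E using v by simp
      also have "(G * Mp L') *\<^sub>v v = (G * Mp L' * P) *\<^sub>v v" by (simp add: GMpP)
      also have "\<dots> = G *\<^sub>v ?w" using v by simp
      finally show ?thesis .
    qed
    have "(E *\<^sub>v v) \<bullet> (E *\<^sub>v v) = (G *\<^sub>v ?w) \<bullet> (G *\<^sub>v ?w)" unfolding Ev using w by simp
    also have "\<dots> \<le> (?w \<bullet> ?w) / lmin^2" using Gb[OF w] lmin_pos by (simp add: field_simps)
    also have "\<dots> \<le> ((c^(2^L'))^2 * (?p \<bullet> ?p)) / lmin^2"
      using Mpb[OF p] lmin_pos by (simp add: divide_right_mono)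
    also have "\<dots> \<le> ((c^(2^L'))^2 * 1) / lmin^2"
      using P_norm[OF v(1)] v(2) lmin_pos by (intro divide_right_mono mult_left_mono) auto
    also have "\<dots> = B^2" unfolding B_def by (simp add: power_divide)
    finally have "(E *\<^sub>v v) \<bullet> (E *\<^sub>v v) \<le> B^2" .
    hence "sqrt ((E *\<^sub>v v) \<bullet> (E *\<^sub>v v)) \<le> sqrt (B^2)" by (rule real_sqrt_le_mono)
    thus ?thesis using B0 by simp
  qed
  have dimE: "dim_col E = n" unfolding E by simp
  have "spec_norm E \<le> B"
    unfolding spec_norm_def dimE
  proof (rule cSup_least)
    show "{sqrt ((E *\<^sub>v v) \<bullet> (E *\<^sub>v v)) |v. v \<in> carrier_vec n \<and> v \<bullet> v = 1} \<noteq> {}"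
      using n1 by (auto intro!: exI[of _ "unit_vec n 0"])
  next
    fix x assume "x \<in> {sqrt ((E *\<^sub>v v) \<bullet> (E *\<^sub>v v)) |v. v \<in> carrier_vec n \<and> v \<bullet> v = 1}"
    thus "x \<le> B" using vb by blast
  qed
  also have "B \<le> (1 / lmin) * exp (- \<delta> * 2 ^ L' * lmin)"
  proof -
    have "c \<le> exp (- \<delta> * lmin)" unfolding c_def using exp_ge_add_one_self[of "- \<delta> * lmin"] by simp
    hence "c^(2^L') \<le> (exp (- \<delta> * lmin))^(2^L')" using c0 by (intro power_mono) auto
    also have "\<dots> = exp (- \<delta> * 2 ^ L' * lmin)"
      by (simp add: exp_of_nat_mult[symmetric] ac_simps)
    finally show ?thesis unfolding B_def using lmin_pos by (simp add: divide_right_mono)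
  qed
  finally show ?thesis unfolding E_def .
qed

end


context lapc begin
lemma main_explicit:
  assumes d: "\<delta> > 0" and Lge: "L' \<ge> 1"
  and e1: "eigenvalue L lmin" and e2: "lmin \<noteq> 0" and e3: "\<forall>\<mu>. eigenvalue L \<mu> \<and> \<mu> \<noteq> 0 \<longrightarrow> lmin \<le> \<mu>"
  and e4: "eigenvalue L lmax" and e5: "\<forall>\<mu>. eigenvalue L \<mu> \<longrightarrow> \<mu> \<le> lmax" and e6: "lmax \<le> 1 / \<delta>"
  shows "spec_norm (row_block (2*n+1) (3*n) (tf_run
      (\<lambda>_. bd3 n (1\<^sub>m n) (0\<^sub>m n n) (1\<^sub>m n - mat n n (\<lambda>_. 1 / real n)))
      (\<lambda>_. 1\<^sub>m (3*n)) (\<lambda>_. shK n)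
      (\<lambda>_. bd3 n (- 1\<^sub>m n) (0\<^sub>m n n) (- mat n n (\<lambda>_. 1 / real n))) L' (tf_input n \<delta> L)) - pinv L)
           \<le> (1 / lmin) * exp (- \<delta> * 2 ^ L' * lmin)"
  using main_bound[OF assms] unfolding P_def Q_def .
end

theorem lemma4:
  fixes n L :: nat and \<delta> :: real
  assumes "n \<ge> 1" and "L \<ge> 1" and "\<delta> > 0"
  shows "\<exists>WV WQ WK WR :: nat \<Rightarrow> real mat.
           (\<forall>l<L. WV l \<in> carrier_mat (3 * n) (3 * n) \<and> WQ l \<in> carrier_mat (3 * n) (3 * n)
                 \<and> WK l \<in> carrier_mat (3 * n) (3 * n) \<and> WR l \<in> carrier_mat (3 * n) (3 * n)) \<and>
           (\<forall>d etl ehd r lmin lmax.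
              valid_graph n d etl ehd r \<longrightarrow> graph_connected n d etl ehd \<longrightarrow>
              (let Lap = laplacian n d etl ehd r in
                 eigenvalue Lap lmin \<longrightarrow> lmin \<noteq> 0 \<longrightarrow> (\<forall>\<mu>. eigenvalue Lap \<mu> \<and> \<mu> \<noteq> 0 \<longrightarrow> lmin \<le> \<mu>) \<longrightarrow>
                 eigenvalue Lap lmax \<longrightarrow> (\<forall>\<mu>. eigenvalue Lap \<mu> \<longrightarrow> \<mu> \<le> lmax) \<longrightarrow> lmax \<le> 1 / \<delta> \<longrightarrow>
                 spec_norm (row_block (2 * n + 1) (3 * n) (tf_run WV WQ WK WR L (tf_input n \<delta> Lap)) - pinv Lap)
                   \<le> (1 / lmin) * exp (- \<delta> * 2 ^ L * lmin)))"
proof -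
  define WV0 :: "nat \<Rightarrow> real mat" where "WV0 = (\<lambda>_. bd3 n (1\<^sub>m n) (0\<^sub>m n n) (1\<^sub>m n - mat n n (\<lambda>_. 1 / real n)))"
  define WQ0 :: "nat \<Rightarrow> real mat" where "WQ0 = (\<lambda>_. 1\<^sub>m (3*n))"
  define WK0 :: "nat \<Rightarrow> real mat" where "WK0 = (\<lambda>_. shK n)"
  define WR0 :: "nat \<Rightarrow> real mat" where "WR0 = (\<lambda>_. bd3 n (- 1\<^sub>m n) (0\<^sub>m n n) (- mat n n (\<lambda>_. 1 / real n)))"
  have car: "\<forall>l<L. WV0 l \<in> carrier_mat (3 * n) (3 * n) \<and> WQ0 l \<in> carrier_mat (3 * n) (3 * n)
                 \<and> WK0 l \<in> carrier_mat (3 * n) (3 * n) \<and> WR0 l \<in> carrier_mat (3 * n) (3 * n)"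
    unfolding WV0_def WQ0_def WK0_def WR0_def by simp
  have main: "\<forall>d etl ehd r lmin lmax.
              valid_graph n d etl ehd r \<longrightarrow> graph_connected n d etl ehd \<longrightarrow>
              (let Lap = laplacian n d etl ehd r in
                 eigenvalue Lap lmin \<longrightarrow> lmin \<noteq> 0 \<longrightarrow> (\<forall>\<mu>. eigenvalue Lap \<mu> \<and> \<mu> \<noteq> 0 \<longrightarrow> lmin \<le> \<mu>) \<longrightarrow>
                 eigenvalue Lap lmax \<longrightarrow> (\<forall>\<mu>. eigenvalue Lap \<mu> \<longrightarrow> \<mu> \<le> lmax) \<longrightarrow> lmax \<le> 1 / \<delta> \<longrightarrow>
                 spec_norm (row_block (2 * n + 1) (3 * n) (tf_run WV0 WQ0 WK0 WR0 L (tf_input n \<delta> Lap)) - pinv Lap)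
                   \<le> (1 / lmin) * exp (- \<delta> * 2 ^ L * lmin))"
  proof (intro allI impI)
    fix d etl ehd r lmin lmax
    assume vg: "valid_graph n d etl ehd r" and con: "graph_connected n d etl ehd"
    interpret lapc n "laplacian n d etl ehd r" \<delta>
    proof
      show "1 \<le> n" by (rule assms(1))
      show "laplacian n d etl ehd r \<in> carrier_mat n n" by simp
      show "(laplacian n d etl ehd r)\<^sup>T = laplacian n d etl ehd r" by (rule lap_sym)
      show "laplacian n d etl ehd r *\<^sub>v onev n = 0\<^sub>v n" by (rule lap_onev[OF vg])
      show "\<And>v. v \<in> carrier_vec n \<Longrightarrow> 0 \<le> v \<bullet> (laplacian n d etl ehd r *\<^sub>v v)" by (rule lap_psd)
      show "\<And>v i k. v \<in> carrier_vec n \<Longrightarrow> v \<bullet> (laplacian n d etl ehd r *\<^sub>v v) = 0 \<Longrightarrow> i < n \<Longrightarrow> k < n \<Longrightarrow> v $ i = v $ k"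
        by (rule lap_kernel[OF vg con])
    qed
    show "let Lap = laplacian n d etl ehd r in
                 eigenvalue Lap lmin \<longrightarrow> lmin \<noteq> 0 \<longrightarrow> (\<forall>\<mu>. eigenvalue Lap \<mu> \<and> \<mu> \<noteq> 0 \<longrightarrow> lmin \<le> \<mu>) \<longrightarrow>
                 eigenvalue Lap lmax \<longrightarrow> (\<forall>\<mu>. eigenvalue Lap \<mu> \<longrightarrow> \<mu> \<le> lmax) \<longrightarrow> lmax \<le> 1 / \<delta> \<longrightarrow>
                 spec_norm (row_block (2 * n + 1) (3 * n) (tf_run WV0 WQ0 WK0 WR0 L (tf_input n \<delta> Lap)) - pinv Lap)
                   \<le> (1 / lmin) * exp (- \<delta> * 2 ^ L * lmin)"
      unfolding Let_def WV0_def WQ0_def WK0_def WR0_def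
      using main_explicit[OF assms(3) assms(2)] by blast
  qed
  show ?thesis
    by (rule exI[where x=WV0], rule exI[where x=WQ0], rule exI[where x=WK0], rule exI[where x=WR0])
      (use car main in blast)
qed


end
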